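(* Let $a>1$ and consider on $M_h$ with $2h=1$ the reduced oblate integrable system $(\ell_{34},G_{obl})$, where $G_{obl}=a\ell_{12}^2+\ell_{13}^2+\ell_{14}^2$. The critical values of the momentum map $(\ell_{34},G_{obl}):M_h\to\mathbb R^2$ are (the parts lying in the image of the momentum map of) the curves $\mathcal O_1: G_{obl}=(\sqrt a-\sqrt{a-1}\,|\ell_{34}|)^2$, $\mathcal O_2: G_{obl}=1-\ell_{34}^2$, and $\mathcal O_3: G_{obl}=0$.
   Context: $\mathbf L=(\ell_{12},\ell_{13},\ell_{14},\ell_{23},\ell_{24},\ell_{34})\in\mathbb R^6\cong\mathfrak{so}(4)^*$ with the Lie–Poisson bracket of $\mathfrak{so}(4)$ (extending $\ell_{ji}=-\ell_{ij}$: $\{\ell_{ij},\ell_{jk}\}=-\ell_{ik}$ for distinct $i,j,k$, and $\{\ell_{ij},\ell_{kl}\}=0$ when $\{i,j\}\cap\{k,l\}=\emptyset$). $M_h=\{\mathbf L:\sum_{i<j}\ell_{ij}^2=2h,\ \ell_{12}\ell_{34}-\ell_{13}\ell_{24}+\ell_{14}\ell_{23}=0\}\cong S^2\times S^2$ is a symplectic leaf. This system arises from separating the geodesic flow on $S^3$ in oblate coordinates (ellipsoidal parameters $(0,1,a,a)$). *)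

theory Defs
  imports "HOL-Analysis.Analysis"
begin

definition l12 :: "real^6 \<Rightarrow> real" where "l12 L = L$1"
definition l13 :: "real^6 \<Rightarrow> real" where "l13 L = L$2"
definition l14 :: "real^6 \<Rightarrow> real" where "l14 L = L$3"
definition l23 :: "real^6 \<Rightarrow> real" where "l23 L = L$4"
definition l24 :: "real^6 \<Rightarrow> real" where "l24 L = L$5"
definition l34 :: "real^6 \<Rightarrow> real" where "l34 L = L$6"

definition casimir1 :: "real^6 \<Rightarrow> real" where
  "casimir1 L = (l12 L)^2 + (l13 L)^2 + (l14 L)^2 + (l23 L)^2 + (l24 L)^2 + (l34 L)^2"

definition casimir2 :: "real^6 \<Rightarrow> real" where
  "casimir2 L = l12 L * l34 L - l13 L * l24 L + l14 L * l23 L"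

definition M_h :: "real \<Rightarrow> (real^6) set" where
  "M_h h = {L. casimir1 L = 2 * h \<and> casimir2 L = 0}"

definition G_obl :: "real \<Rightarrow> real^6 \<Rightarrow> real" where
  "G_obl a L = a * (l12 L)^2 + (l13 L)^2 + (l14 L)^2"

definition momentum :: "real \<Rightarrow> real^6 \<Rightarrow> real \<times> real" where
  "momentum a L = (l34 L, G_obl a L)"

text \<open>Tangent space of the leaf at L (as embedded submanifold cut out by the
  two Casimirs, whose differentials are independent on M_h for h > 0).\<close>
definition leaf_tangent :: "real^6 \<Rightarrow> (real^6) set" where
  "leaf_tangent L = {v. frechet_derivative casimir1 (at L) v = 0
                      \<and> frechet_derivative casimir2 (at L) v = 0}"

definition critical_point :: "real \<Rightarrow> real \<Rightarrow> real^6 \<Rightarrow> bool" where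
  "critical_point a h L \<longleftrightarrow> L \<in> M_h h \<and>
     \<not> (\<forall>p :: real \<times> real. \<exists>v \<in> leaf_tangent L.
          (frechet_derivative l34 (at L) v, frechet_derivative (G_obl a) (at L) v) = p)"

definition critical_values :: "real \<Rightarrow> real \<Rightarrow> (real \<times> real) set" where
  "critical_values a h = momentum a ` {L. critical_point a h L}"

end

theory Submission
  imports Defs
begin

lemma lagrange4: "(x2^2+x3^2)*(x4^2+x5^2) = (x2*x5 - x3*x4)^2 + (x2*x4 + x3*x5)^2" for x2 x3 x4 x5 :: real
  by algebra

lemma F_identity:
  fixes a x1 x2 x3 x4 x5 x6 :: real
  assumes a: "a > 1" and C1: "x1^2+x2^2+x3^2+x4^2+x5^2+x6^2 = 1"
  defines "sa \<equiv> sqrt a" and "ta \<equiv> sqrt (a-1)" and "Sv \<equiv> sqrt (x4^2+x5^2+x6^2)" and "mv \<equiv> sqrt (x2^2+x3^2+x6^2)"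
  shows "(sa - ta*\<bar>x6\<bar>)^2 - (a*x1^2+x2^2+x3^2) = (sa* Sv - ta*mv)^2 + 2* sa*ta*(Sv*mv - \<bar>x6\<bar>)"
proof -
  have s2: "sa^2 = a" using a unfolding sa_def by simp
  have t2: "ta^2 = a - 1" using a unfolding ta_def by simp
  have S2: "Sv^2 = x4^2+x5^2+x6^2" unfolding Sv_def by simp
  have m2: "mv^2 = x2^2+x3^2+x6^2" unfolding mv_def by simp
  have y2: "\<bar>x6\<bar>^2 = x6^2" by simp
  have e1: "(sa - ta*\<bar>x6\<bar>)^2 = sa^2 - 2* sa*ta*\<bar>x6\<bar> + ta^2*\<bar>x6\<bar>^2" by (simp add: power2_eq_square algebra_simps)
  have e2: "(sa* Sv - ta*mv)^2 = sa^2* Sv^2 - 2* sa*ta*(Sv*mv) + ta^2*mv^2" by (simp add: power2_eq_square algebra_simps)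
  show ?thesis unfolding e1 e2 s2 t2 S2 m2 y2 using C1 by algebra
qed

lemma Sm_sq:
  fixes x1 x2 x3 x4 x5 x6 :: real
  assumes C1: "x1^2+x2^2+x3^2+x4^2+x5^2+x6^2 = 1" and C2: "x1*x6 - x2*x5 + x3*x4 = 0"
  shows "(sqrt (x4^2+x5^2+x6^2) * sqrt (x2^2+x3^2+x6^2))^2 = x6^2 + (x2*x4+x3*x5)^2"
proof -
  have "(sqrt (x4^2+x5^2+x6^2) * sqrt (x2^2+x3^2+x6^2))^2 = (x4^2+x5^2+x6^2)*(x2^2+x3^2+x6^2)"
    by (simp add: power_mult_distrib)
  also have "\<dots> = (x2^2+x3^2)*(x4^2+x5^2) + x6^2*(x2^2+x3^2+x4^2+x5^2+x6^2)" by (simp add: algebra_simps power2_eq_square)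
  also have "\<dots> = (x2*x5 - x3*x4)^2 + (x2*x4 + x3*x5)^2 + x6^2*(1 - x1^2)" using C1 lagrange4[of x2 x3 x4 x5] by algebra
  also have "(x2*x5 - x3*x4) = x1*x6" using C2 by simp
  finally show ?thesis by (simp add: algebra_simps power2_eq_square)
qed

lemma O1_iff:
  fixes a x1 x2 x3 x4 x5 x6 :: real
  assumes a: "a > 1" and C1: "x1^2+x2^2+x3^2+x4^2+x5^2+x6^2 = 1" and C2: "x1*x6 - x2*x5 + x3*x4 = 0"
  shows "a*x1^2+x2^2+x3^2 = (sqrt a - sqrt (a-1)*\<bar>x6\<bar>)^2 \<longleftrightarrow>
         (x2*x4+x3*x5 = 0 \<and> a*(x4^2+x5^2+x6^2) = (a-1)*(x2^2+x3^2+x6^2))"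
proof -
  define sa where "sa = sqrt a"
  define ta where "ta = sqrt (a-1)"
  define Sv where "Sv = sqrt (x4^2+x5^2+x6^2)"
  define mv where "mv = sqrt (x2^2+x3^2+x6^2)"
  have F: "(sa - ta*\<bar>x6\<bar>)^2 - (a*x1^2+x2^2+x3^2) = (sa* Sv - ta*mv)^2 + 2* sa*ta*(Sv*mv - \<bar>x6\<bar>)"
    unfolding sa_def ta_def Sv_def mv_def by (rule F_identity[OF a C1])
  have Sm: "(Sv*mv)^2 = x6^2 + (x2*x4+x3*x5)^2" unfolding Sv_def mv_def by (rule Sm_sq[OF C1 C2])
  have Sm0: "Sv*mv \<ge> 0" unfolding Sv_def mv_def by simp
  have st: "sa*ta > 0" unfolding sa_def ta_def using a by simp
  have s0: "sa \<ge> 0" "ta \<ge> 0" "Sv \<ge> 0" "mv \<ge> 0" unfolding sa_def ta_def Sv_def mv_def using a by auto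
  have sS2: "(sa* Sv)^2 = a*(x4^2+x5^2+x6^2)" unfolding sa_def Sv_def using a by (simp add: power_mult_distrib)
  have tm2: "(ta*mv)^2 = (a-1)*(x2^2+x3^2+x6^2)" unfolding ta_def mv_def using a by (simp add: power_mult_distrib)
  have Smy: "Sv*mv \<ge> \<bar>x6\<bar>"
  proof -
    have "\<bar>x6\<bar>^2 \<le> (Sv*mv)^2" using Sm by simp
    then show ?thesis using Sm0 by (meson abs_ge_zero power2_le_imp_le)
  qed
  show ?thesis
  proof
    assume h: "a*x1^2+x2^2+x3^2 = (sqrt a - sqrt (a-1)*\<bar>x6\<bar>)^2"
    then have "(sa* Sv - ta*mv)^2 + 2* sa*ta*(Sv*mv - \<bar>x6\<bar>) = 0" using F unfolding sa_def ta_def by simp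
    moreover have "2* sa*ta*(Sv*mv - \<bar>x6\<bar>) \<ge> 0" using st Smy by simp
    ultimately have z1: "(sa* Sv - ta*mv)^2 = 0" and z2: "2* sa*ta*(Sv*mv - \<bar>x6\<bar>) = 0"
      by (smt (verit) zero_le_power2)+
    from z1 have "sa* Sv = ta*mv" by simp
    then have q: "a*(x4^2+x5^2+x6^2) = (a-1)*(x2^2+x3^2+x6^2)" using sS2 tm2 by simp
    have "sa > 0" "ta > 0" unfolding sa_def ta_def using a by auto
    with z2 have "Sv*mv = \<bar>x6\<bar>" by simp
    then have "(x2*x4+x3*x5)^2 = 0" using Sm by simp
    then have "x2*x4+x3*x5 = 0" by simp
    with q show "x2*x4+x3*x5 = 0 \<and> a*(x4^2+x5^2+x6^2) = (a-1)*(x2^2+x3^2+x6^2)" by simp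
  next
    assume h: "x2*x4+x3*x5 = 0 \<and> a*(x4^2+x5^2+x6^2) = (a-1)*(x2^2+x3^2+x6^2)"
    then have "(Sv*mv)^2 = \<bar>x6\<bar>^2" using Sm by simp
    then have e1: "Sv*mv = \<bar>x6\<bar>" using Sm0 by (metis abs_ge_zero power2_eq_iff_nonneg)
    have "(sa* Sv)^2 = (ta*mv)^2" using sS2 tm2 h by simp
    then have e2: "sa* Sv = ta*mv" using s0 by (metis mult_nonneg_nonneg power2_eq_iff_nonneg)
    show "a*x1^2+x2^2+x3^2 = (sqrt a - sqrt (a-1)*\<bar>x6\<bar>)^2" using F e1 e2 unfolding sa_def ta_def by simp
  qed
qed

lemma zero4:
  fixes a x1 x2 x3 x4 x5 x6 :: real
  assumes a: "a > 1" and C1: "x1^2+x2^2+x3^2+x4^2+x5^2+x6^2 = 1" and C2: "x1*x6 - x2*x5 + x3*x4 = 0"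
    and z: "x2 = 0" "x3 = 0" "x4 = 0" "x5 = 0"
  shows "a*x1^2+x2^2+x3^2 = (sqrt a - sqrt (a-1)*\<bar>x6\<bar>)^2 \<or> a*x1^2+x2^2+x3^2 = 0"
proof -
  have "x1*x6 = 0" using C2 z by simp
  then consider "x1 = 0" | "x6 = 0" by auto
  then show ?thesis
  proof cases
    case 1 then show ?thesis using z by simp
  next
    case 2
    then have "x1^2 = 1" using C1 z by simp
    then show ?thesis using z 2 a by simp
  qed
qed

lemma crit_alg:
  fixes a x1 x2 x3 x4 x5 x6 \<alpha> \<beta> \<mu> \<nu> :: real
  assumes a: "a > 1" and C1: "x1^2+x2^2+x3^2+x4^2+x5^2+x6^2 = 1" and C2: "x1*x6 - x2*x5 + x3*x4 = 0"
    and nz: "\<alpha> \<noteq> 0 \<or> \<beta> \<noteq> 0"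
    and R1: "2*a*\<beta>*x1 = \<mu>*x1 + \<nu>*x6"
    and R2: "2*\<beta>*x2 = \<mu>*x2 - \<nu>*x5"
    and R3: "2*\<beta>*x3 = \<mu>*x3 + \<nu>*x4"
    and R4: "0 = \<mu>*x4 + \<nu>*x3"
    and R5: "0 = \<mu>*x5 - \<nu>*x2"
    and R6: "\<alpha> = \<mu>*x6 + \<nu>*x1"
  shows "a*x1^2+x2^2+x3^2 = (sqrt a - sqrt (a-1)*\<bar>x6\<bar>)^2 \<or> a*x1^2+x2^2+x3^2 = 1 - x6^2 \<or> a*x1^2+x2^2+x3^2 = 0"
proof (cases "\<beta> = 0")
  case True
  then have al: "\<alpha> \<noteq> 0" using nz by simp
  have e2: "(\<mu>^2 - \<nu>^2)*x2 = 0" "(\<mu>^2 - \<nu>^2)*x5 = 0" "(\<mu>^2 - \<nu>^2)*x3 = 0" "(\<mu>^2 - \<nu>^2)*x4 = 0"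
    using R2 R3 R4 R5 True by algebra+
  show ?thesis
  proof (cases "\<mu>^2 = \<nu>^2")
    case False
    then have "x2 = 0" "x3 = 0" "x4 = 0" "x5 = 0" using e2 by auto
    then show ?thesis using zero4[OF a C1 C2] by blast
  next
    case True
    then have "\<mu> = \<nu> \<or> \<mu> = -\<nu>" by (simp add: power2_eq_iff)
    moreover have "\<mu>*x1 + \<nu>*x6 = 0" using R1 \<open>\<beta> = 0\<close> by simp
    ultimately have "\<alpha> = 0" using R6 by (auto simp: algebra_simps)
    with al show ?thesis by simp
  qed
next
  case False
  define m where "m = \<mu>/\<beta>"
  define n where "n = \<nu>/\<beta>"
  have Q1: "2*a*x1 = m*x1 + n*x6" using R1 False unfolding m_def n_def by (simp add: field_simps)
  have Q2: "2*x2 = m*x2 - n*x5" using R2 False unfolding m_def n_def by (simp add: field_simps)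
  have Q3: "2*x3 = m*x3 + n*x4" using R3 False unfolding m_def n_def by (simp add: field_simps)
  have Q4: "0 = m*x4 + n*x3" using R4 False unfolding m_def n_def by (simp add: field_simps)
  have Q5: "0 = m*x5 - n*x2" using R5 False unfolding m_def n_def by (simp add: field_simps)
  define D where "D = 2*m - m^2 + n^2"
  have eD: "D*x2 = 0" "D*x3 = 0" "D*x4 = 0" "D*x5 = 0" unfolding D_def using Q2 Q3 Q4 Q5 by algebra+
  show ?thesis
  proof (cases "D = 0")
    case False
    then have "x2 = 0" "x3 = 0" "x4 = 0" "x5 = 0" using eD by auto
    then show ?thesis using zero4[OF a C1 C2] by blast
  next
    case D0: True
    show ?thesis
    proof (cases "n = 0")
      case True
      then have "m*(2-m) = 0" using D0 unfolding D_def by (simp add: algebra_simps power2_eq_square)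
      then consider "m = 0" | "m = 2" by auto
      then show ?thesis
      proof cases
        case 1
        then have "x1 = 0" "x2 = 0" "x3 = 0" using Q1 Q2 Q3 True a by auto
        then show ?thesis by simp
      next
        case 2
        then have "(2*a-2)*x1 = 0" using Q1 True by (simp add: algebra_simps)
        then have "x1 = 0" using a by simp
        moreover have "x4 = 0" "x5 = 0" using Q4 Q5 True 2 by auto
        ultimately show ?thesis using C1 by (simp add: algebra_simps)
      qed
    next
      case n0: False
      have m0: "m \<noteq> 0" using D0 n0 unfolding D_def by auto
      have "m*(x2*x4+x3*x5) = 0" using Q4 Q5 by algebra
      then have P: "x2*x4+x3*x5 = 0" using m0 by simp
      have c1: "m*x1*x6 = n*(x2^2+x3^2)" using C2 Q4 Q5 by algebra
      have c2: "n*((2*a-m)*(x2^2+x3^2) - m*x6^2) = 0" using c1 Q1 by algebra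
      have c3: "(2*a-m)*(x2^2+x3^2) = m*x6^2" using c2 n0 by simp
      have c4: "m*(x4^2+x5^2) = (m-2)*(x2^2+x3^2)"
      proof -
        have "m^2*(x4^2+x5^2) = n^2*(x2^2+x3^2)" using Q4 Q5 by algebra
        then have "m*(m*(x4^2+x5^2) - (m-2)*(x2^2+x3^2)) = 0" using D0 unfolding D_def by algebra
        then show ?thesis using m0 by simp
      qed
      have "m*(a*(x4^2+x5^2+x6^2) - (a-1)*(x2^2+x3^2+x6^2)) = 0" using c3 c4 by algebra
      then have Q: "a*(x4^2+x5^2+x6^2) = (a-1)*(x2^2+x3^2+x6^2)" using m0 by simp
      show ?thesis using O1_iff[OF a C1 C2] P Q by blast
    qed
  qed
qed

lemma d_nth: "((\<lambda>x::real^6. x $ i) has_derivative (\<lambda>v. v $ i)) (at L)"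
  by (simp add: bounded_linear_imp_has_derivative bounded_linear_vec_nth)

lemma d_sq: "((\<lambda>x::real^6. (x $ i)^2) has_derivative (\<lambda>v. 2 * L$i * v $ i)) (at L)"
proof -
  have "((\<lambda>x::real^6. (x $ i)^2) has_derivative (\<lambda>v. of_nat 2 * v $ i * (L$i)^(2-1))) (at L)"
    by (rule has_derivative_power[OF d_nth])
  then show ?thesis by (simp add: mult.commute mult.left_commute)
qed

lemma d_prod: "((\<lambda>x::real^6. x $ i * x $ j) has_derivative (\<lambda>v. L$i * v$j + v$i * L$j)) (at L)"
  by (rule has_derivative_mult[OF d_nth d_nth])

lemma fd_unique: "(f has_derivative f') (at L) \<Longrightarrow> frechet_derivative f (at L) = f'"
  by (metis differentiableI frechet_derivative_works has_derivative_unique)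

lemma fd_l34: "frechet_derivative l34 (at L) = (\<lambda>v. v$6)"
  unfolding l34_def[abs_def] by (rule fd_unique[OF d_nth])

lemma fd_G: "frechet_derivative (G_obl a) (at L) = (\<lambda>v. a * (2*L$1* v$1) + 2*L$2* v$2 + 2*L$3* v$3)"
  unfolding G_obl_def[abs_def] l12_def l13_def l14_def
  by (intro fd_unique has_derivative_add has_derivative_mult_right d_sq)

lemma fd_C1: "frechet_derivative casimir1 (at L) = (\<lambda>v. 2*L$1* v$1 + 2*L$2* v$2 + 2*L$3* v$3 + 2*L$4* v$4 + 2*L$5* v$5 + 2*L$6* v$6)"
  unfolding casimir1_def[abs_def] l12_def l13_def l14_def l23_def l24_def l34_def
  by (intro fd_unique has_derivative_add d_sq)

lemma fd_C2: "frechet_derivative casimir2 (at L) = (\<lambda>v. (L$1 * v$6 + v$1 * L$6) - (L$2* v$5 + v$2*L$5) + (L$3* v$4 + v$3*L$4))"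
  unfolding casimir2_def[abs_def] l12_def l13_def l14_def l23_def l24_def l34_def
  by (intro fd_unique has_derivative_add has_derivative_diff d_prod)

lemma Mh_iff: "L \<in> M_h (1/2) \<longleftrightarrow>
   (L$1)^2+(L$2)^2+(L$3)^2+(L$4)^2+(L$5)^2+(L$6)^2 = 1 \<and> L$1*L$6 - L$2*L$5 + L$3*L$4 = 0"
  by (simp add: M_h_def casimir1_def casimir2_def l12_def l13_def l14_def l23_def l24_def l34_def)

lemma mom_eq: "momentum a L = (L$6, a*(L$1)^2 + (L$2)^2 + (L$3)^2)"
  by (simp add: momentum_def G_obl_def l12_def l13_def l14_def l34_def)

lemma dep_crit:
  fixes L :: "real^6"
  assumes M: "L \<in> M_h h" and nz: "\<alpha> \<noteq> 0 \<or> \<beta> \<noteq> 0"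
    and R1: "2*a*\<beta>*L$1 = \<mu>*L$1 + \<nu>*L$6"
    and R2: "2*\<beta>*L$2 = \<mu>*L$2 - \<nu>*L$5"
    and R3: "2*\<beta>*L$3 = \<mu>*L$3 + \<nu>*L$4"
    and R4: "0 = \<mu>*L$4 + \<nu>*L$3"
    and R5: "0 = \<mu>*L$5 - \<nu>*L$2"
    and R6: "\<alpha> = \<mu>*L$6 + \<nu>*L$1"
  shows "critical_point a h L"
  unfolding critical_point_def
proof (intro conjI notI M)
  assume "\<forall>p. \<exists>v\<in>leaf_tangent L. (frechet_derivative l34 (at L) v, frechet_derivative (G_obl a) (at L) v) = p"
  then obtain v where v: "v \<in> leaf_tangent L"
    "(frechet_derivative l34 (at L) v, frechet_derivative (G_obl a) (at L) v) = (\<alpha>, \<beta>)" by blast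
  then have t1: "2*L$1* v$1 + 2*L$2* v$2 + 2*L$3* v$3 + 2*L$4* v$4 + 2*L$5* v$5 + 2*L$6* v$6 = 0"
    and t2: "(L$1 * v$6 + v$1 * L$6) - (L$2* v$5 + v$2*L$5) + (L$3* v$4 + v$3*L$4) = 0"
    and p1: "v$6 = \<alpha>" and p2: "a * (2*L$1* v$1) + 2*L$2* v$2 + 2*L$3* v$3 = \<beta>"
    unfolding leaf_tangent_def fd_C1 fd_C2 fd_l34 fd_G by auto
  have "\<alpha>* v$6 + \<beta>*(a * (2*L$1* v$1) + 2*L$2* v$2 + 2*L$3* v$3)
      = (\<mu>/2)*(2*L$1* v$1 + 2*L$2* v$2 + 2*L$3* v$3 + 2*L$4* v$4 + 2*L$5* v$5 + 2*L$6* v$6)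
        + \<nu>*((L$1 * v$6 + v$1 * L$6) - (L$2* v$5 + v$2*L$5) + (L$3* v$4 + v$3*L$4))"
    using R1 R2 R3 R4 R5 R6 by algebra
  then have "\<alpha>*\<alpha> + \<beta>*\<beta> = 0" using t1 t2 p1 p2 by simp
  then show False using nz by (metis add_nonneg_eq_0_iff mult_eq_0_iff zero_le_square)
qed

lemma nonsurj_orth:
  fixes F :: "'a::euclidean_space \<Rightarrow> 'b::euclidean_space"
  assumes "linear F" "\<not> surj F"
  obtains w where "w \<noteq> 0" "\<And>v. inner w (F v) = 0"
proof -
  have sub: "subspace (range F)" using assms(1) by (simp add: subspace_UNIV linear_subspace_image)
  then have sp: "span (range F) = range F" by (simp add: span_eq_iff)
  have "dim (range F) \<noteq> DIM('b)"
  proof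
    assume "dim (range F) = DIM('b)"
    then have "span (range F) = UNIV" using dim_eq_full by (metis dim_UNIV)
    then show False using sp assms(2) by simp
  qed
  moreover have "dim (range F) \<le> DIM('b)" by (metis dim_subset_UNIV dim_UNIV)
  ultimately have "dim (range F) < DIM('b)" by simp
  then obtain w where "w \<noteq> 0" "\<And>y. y \<in> span (range F) \<Longrightarrow> orthogonal w y"
    using orthogonal_to_subspace_exists by blast
  then show ?thesis using that sp by (auto simp: orthogonal_def)
qed

lemma crit_dep:
  fixes L :: "real^6"
  assumes C: "critical_point a (1/2) L"
  shows "\<exists>\<alpha> \<beta> \<mu> \<nu>. (\<alpha> \<noteq> 0 \<or> \<beta> \<noteq> 0) \<and>
    2*a*\<beta>*L$1 = \<mu>*L$1 + \<nu>*L$6 \<and>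
    2*\<beta>*L$2 = \<mu>*L$2 - \<nu>*L$5 \<and>
    2*\<beta>*L$3 = \<mu>*L$3 + \<nu>*L$4 \<and>
    0 = \<mu>*L$4 + \<nu>*L$3 \<and>
    0 = \<mu>*L$5 - \<nu>*L$2 \<and>
    \<alpha> = \<mu>*L$6 + \<nu>*L$1"
proof -
  have M: "L \<in> M_h (1/2)" and nc: "\<not> (\<forall>p :: real \<times> real. \<exists>v \<in> leaf_tangent L.
          (frechet_derivative l34 (at L) v, frechet_derivative (G_obl a) (at L) v) = p)"
    using C unfolding critical_point_def by auto
  have C1: "(L$1)^2+(L$2)^2+(L$3)^2+(L$4)^2+(L$5)^2+(L$6)^2 = 1" and C2: "L$1*L$6 - L$2*L$5 + L$3*L$4 = 0"
    using M by (auto simp: Mh_iff)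
  define F where "F = (\<lambda>v::real^6. (v$6, a * (2*L$1* v$1) + 2*L$2* v$2 + 2*L$3* v$3,
      2*L$1* v$1 + 2*L$2* v$2 + 2*L$3* v$3 + 2*L$4* v$4 + 2*L$5* v$5 + 2*L$6* v$6,
      (L$1 * v$6 + v$1 * L$6) - (L$2* v$5 + v$2*L$5) + (L$3* v$4 + v$3*L$4)))"
  have lin: "linear F" unfolding F_def by (rule linearI) (simp_all add: algebra_simps)
  have ns: "\<not> surj F"
  proof
    assume su: "surj F"
    have "\<forall>p :: real \<times> real. \<exists>v \<in> leaf_tangent L.
          (frechet_derivative l34 (at L) v, frechet_derivative (G_obl a) (at L) v) = p"
    proof
      fix p :: "real \<times> real"
      obtain v where "F v = (fst p, snd p, 0, 0)" using su by (metis surjD)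
      then show "\<exists>v \<in> leaf_tangent L.
          (frechet_derivative l34 (at L) v, frechet_derivative (G_obl a) (at L) v) = p"
        unfolding leaf_tangent_def fd_C1 fd_C2 fd_l34 fd_G F_def by (intro bexI[of _ v]) auto
    qed
    with nc show False by blast
  qed
  obtain w where w: "w \<noteq> 0" "\<And>v. inner w (F v) = 0" using nonsurj_orth[OF lin ns] by blast
  obtain w1 w2 w3 w4 where wd: "w = (w1,w2,w3,w4)" by (cases w) auto
  have rk: "w1*(v$6) + w2*(a * (2*L$1* v$1) + 2*L$2* v$2 + 2*L$3* v$3) +
      w3*(2*L$1* v$1 + 2*L$2* v$2 + 2*L$3* v$3 + 2*L$4* v$4 + 2*L$5* v$5 + 2*L$6* v$6) +
      w4*((L$1 * v$6 + v$1 * L$6) - (L$2* v$5 + v$2*L$5) + (L$3* v$4 + v$3*L$4)) = 0" for v :: "real^6"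
    using w(2)[of v] unfolding wd F_def by (simp add: algebra_simps)
  have k1: "w2*(a*(2*L$1)) + w3*(2*L$1) + w4*L$6 = 0" using rk[of "axis 1 1"] by (simp add: axis_def)
  have k2: "w2*(2*L$2) + w3*(2*L$2) - w4*L$5 = 0" using rk[of "axis 2 1"] by (simp add: axis_def)
  have k3: "w2*(2*L$3) + w3*(2*L$3) + w4*L$4 = 0" using rk[of "axis 3 1"] by (simp add: axis_def)
  have k4: "w3*(2*L$4) + w4*L$3 = 0" using rk[of "axis 4 1"] by (simp add: axis_def)
  have k5: "w3*(2*L$5) - w4*L$2 = 0" using rk[of "axis 5 1"] by (simp add: axis_def)
  have k6: "w1 + w3*(2*L$6) + w4*L$1 = 0" using rk[of "axis 6 1"] by (simp add: axis_def)
  have nz: "w1 \<noteq> 0 \<or> w2 \<noteq> 0"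
  proof (rule ccontr)
    assume "\<not> (w1 \<noteq> 0 \<or> w2 \<noteq> 0)"
    then have z: "w1 = 0" "w2 = 0" by auto
    have "w3 = 0" using k1 k2 k3 k4 k5 k6 z C1 C2 by algebra
    moreover have "w4 = 0" using k1 k2 k3 k4 k5 k6 z C1 C2 \<open>w3 = 0\<close> by algebra
    ultimately show False using w(1) z wd by (simp add: zero_prod_def)
  qed
  show ?thesis
    by (rule exI[of _ w1], rule exI[of _ w2], rule exI[of _ "-2*w3"], rule exI[of _ "-w4"])
      (use nz k1 k2 k3 k4 k5 k6 in \<open>auto simp: algebra_simps\<close>)
qed

theorem proposition5:
  fixes a :: real
  assumes "a > 1"
  shows "critical_values a (1/2) =
           momentum a ` M_h (1/2) \<inter>
           {(x, y). y = (sqrt a - sqrt (a - 1) * \<bar>x\<bar>)^2 \<or> y = 1 - x^2 \<or> y = 0}"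
proof
  show "critical_values a (1/2) \<subseteq> momentum a ` M_h (1/2) \<inter>
           {(x, y). y = (sqrt a - sqrt (a - 1) * \<bar>x\<bar>)^2 \<or> y = 1 - x^2 \<or> y = 0}"
  proof
    fix z assume "z \<in> critical_values a (1/2)"
    then obtain L where cp: "critical_point a (1/2) L" and z: "z = momentum a L"
      unfolding critical_values_def by auto
    have M: "L \<in> M_h (1/2)" using cp unfolding critical_point_def by auto
    have C1: "(L$1)^2+(L$2)^2+(L$3)^2+(L$4)^2+(L$5)^2+(L$6)^2 = 1" and C2: "L$1*L$6 - L$2*L$5 + L$3*L$4 = 0"
      using M by (auto simp: Mh_iff)
    obtain \<alpha> \<beta> \<mu> \<nu> where nz: "\<alpha> \<noteq> 0 \<or> \<beta> \<noteq> 0" and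
      R: "2*a*\<beta>*L$1 = \<mu>*L$1 + \<nu>*L$6"
      "2*\<beta>*L$2 = \<mu>*L$2 - \<nu>*L$5"
      "2*\<beta>*L$3 = \<mu>*L$3 + \<nu>*L$4"
      "0 = \<mu>*L$4 + \<nu>*L$3"
      "0 = \<mu>*L$5 - \<nu>*L$2"
      "\<alpha> = \<mu>*L$6 + \<nu>*L$1"
      using crit_dep[OF cp] by blast
    have "a*(L$1)^2+(L$2)^2+(L$3)^2 = (sqrt a - sqrt (a-1)*\<bar>L$6\<bar>)^2 \<or>
          a*(L$1)^2+(L$2)^2+(L$3)^2 = 1 - (L$6)^2 \<or> a*(L$1)^2+(L$2)^2+(L$3)^2 = 0"
      by (rule crit_alg[OF assms C1 C2 nz R])
    then show "z \<in> momentum a ` M_h (1/2) \<inter>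
           {(x, y). y = (sqrt a - sqrt (a - 1) * \<bar>x\<bar>)^2 \<or> y = 1 - x^2 \<or> y = 0}"
      using z M by (auto simp: mom_eq)
  qed
next
  show "momentum a ` M_h (1/2) \<inter>
           {(x, y). y = (sqrt a - sqrt (a - 1) * \<bar>x\<bar>)^2 \<or> y = 1 - x^2 \<or> y = 0}
        \<subseteq> critical_values a (1/2)"
  proof
    fix z assume z: "z \<in> momentum a ` M_h (1/2) \<inter>
           {(x, y). y = (sqrt a - sqrt (a - 1) * \<bar>x\<bar>)^2 \<or> y = 1 - x^2 \<or> y = 0}"
    then obtain L where M: "L \<in> M_h (1/2)" and zL: "z = momentum a L" by auto
    have C1: "(L$1)^2+(L$2)^2+(L$3)^2+(L$4)^2+(L$5)^2+(L$6)^2 = 1" and C2: "L$1*L$6 - L$2*L$5 + L$3*L$4 = 0"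
      using M by (auto simp: Mh_iff)
    have a0: "a > 0" using assms by simp
    have cur: "a*(L$1)^2+(L$2)^2+(L$3)^2 = (sqrt a - sqrt (a-1)*\<bar>L$6\<bar>)^2 \<or>
          a*(L$1)^2+(L$2)^2+(L$3)^2 = 1 - (L$6)^2 \<or> a*(L$1)^2+(L$2)^2+(L$3)^2 = 0"
      using z zL by (auto simp: mom_eq)
    then consider (o1) "a*(L$1)^2+(L$2)^2+(L$3)^2 = (sqrt a - sqrt (a-1)*\<bar>L$6\<bar>)^2"
      | (o2) "a*(L$1)^2+(L$2)^2+(L$3)^2 = 1 - (L$6)^2" | (o3) "a*(L$1)^2+(L$2)^2+(L$3)^2 = 0"
      by blast
    then show "z \<in> critical_values a (1/2)"
    proof cases
      case o1
      then have P: "L$2*L$4+L$3*L$5 = 0"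
        and Q: "a*((L$4)^2+(L$5)^2+(L$6)^2) = (a-1)*((L$2)^2+(L$3)^2+(L$6)^2)"
        using O1_iff[OF assms C1 C2] by auto
      have "critical_point a (1/2) L"
      proof (cases "(L$2)^2+(L$3)^2+(L$6)^2 = 0")
        case True
        then have z1: "L$2 = 0" "L$3 = 0" "L$6 = 0" by (auto simp: add_nonneg_eq_0_iff)
        then have "a*((L$4)^2+(L$5)^2) = 0" using Q True by simp
        then have "(L$4)^2+(L$5)^2 = 0" using a0 by simp
        then have z2: "L$4 = 0" "L$5 = 0" by (auto simp: add_nonneg_eq_0_iff)
        show ?thesis
          by (rule dep_crit[OF M, of 0 1 a "2*a" 0]) (simp_all add: z1 z2)
      next
        case False
        show ?thesis
        proof (rule dep_crit[OF M, of "2*a*((L$2)^2+(L$3)^2)*L$6 + 2*a*L$1*L$6*L$1"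
              "(L$2)^2+(L$3)^2+(L$6)^2" a "2*a*((L$2)^2+(L$3)^2)" "2*a*L$1*L$6"])
          show "2*a*((L$2)^2+(L$3)^2)*L$6 + 2*a*L$1*L$6*L$1 \<noteq> 0 \<or> (L$2)^2+(L$3)^2+(L$6)^2 \<noteq> 0"
            using False by simp
          show "2 * a * ((L$2)^2+(L$3)^2+(L$6)^2) * L$1 = 2*a*((L$2)^2+(L$3)^2) * L$1 + 2*a*L$1*L$6 * L$6"
            by algebra
          show "2 * ((L$2)^2+(L$3)^2+(L$6)^2) * L$2 = 2*a*((L$2)^2+(L$3)^2) * L$2 - 2*a*L$1*L$6 * L$5"
            using P Q C2 by algebra
          show "2 * ((L$2)^2+(L$3)^2+(L$6)^2) * L$3 = 2*a*((L$2)^2+(L$3)^2) * L$3 + 2*a*L$1*L$6 * L$4"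
            using P Q C2 by algebra
          show "0 = 2*a*((L$2)^2+(L$3)^2) * L$4 + 2*a*L$1*L$6 * L$3"
            using P Q C2 by algebra
          show "0 = 2*a*((L$2)^2+(L$3)^2) * L$5 - 2*a*L$1*L$6 * L$2"
            using P Q C2 by algebra
          show "2*a*((L$2)^2+(L$3)^2)*L$6 + 2*a*L$1*L$6*L$1 = 2*a*((L$2)^2+(L$3)^2) * L$6 + 2*a*L$1*L$6 * L$1"
            by simp
        qed
      qed
      then show ?thesis using zL unfolding critical_values_def by auto
    next
      case o2
      define x where "x = L$6"
      have x1: "x^2 \<le> 1" using C1 unfolding x_def
        by (smt (verit) zero_le_power2)
      define L' :: "real^6" where "L' = (\<chi> i. if i = 2 then sqrt (1 - x^2) else if i = 6 then x else 0)"
      have c: "L'$1 = 0" "L'$2 = sqrt (1 - x^2)" "L'$3 = 0" "L'$4 = 0" "L'$5 = 0" "L'$6 = x"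
        unfolding L'_def by simp_all
      have sq: "(sqrt (1 - x^2))^2 = 1 - x^2" using x1 by simp
      have M': "L' \<in> M_h (1/2)" unfolding Mh_iff c using sq by simp
      have cp: "critical_point a (1/2) L'"
        by (rule dep_crit[OF M', of "2*x" 1 a 2 0]) (simp_all add: c)
      have "momentum a L' = z" using zL o2 sq unfolding mom_eq c x_def by simp
      then show ?thesis using cp unfolding critical_values_def by auto
    next
      case o3
      have "a*(L$1)^2 = 0 \<and> (L$2)^2 = 0 \<and> (L$3)^2 = 0"
        using o3 a0 by (smt (verit) zero_le_power2 mult_nonneg_nonneg)
      then have z: "L$1 = 0" "L$2 = 0" "L$3 = 0" using a0 by auto
      have "critical_point a (1/2) L"
        by (rule dep_crit[OF M, of 0 1 a 0 0]) (simp_all add: z)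
      then show ?thesis using zL unfolding critical_values_def by auto
    qed
  qed
qed

end
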